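(* There is an absolute constant $C$ such that for all $R_1,R_2\ge1$ and all finitely supported non-negative measures $\mu,\nu$ on $[-1,1]^2$, $$\Big|\sum_{z,w}e^{i(R_1z_1w_1+R_2z_2w_2)}\mu(z)\nu(w)\Big|\le C(R_1R_2)^{\frac12}\Big(\sum_z\mu(z)\Big)^{\frac12}\Big(\sum_w\nu(w)\Big)^{\frac12}M_\mu^{\frac12}M_\nu^{\frac12},$$ where $M_\mu=\max_{\xi_1,\xi_2\in\mathbb{R}}\mu\big(B(\xi_1,\tfrac1{R_1})\times B(\xi_2,\tfrac1{R_2})\big)$ and similarly for $M_\nu$.
   Context: Here $z=(z_1,z_2)$, $w=(w_1,w_2)$ range over the supports of $\mu$ and $\nu$, $\mu(z)$ denotes the mass of $\mu$ at $z$, and $B(\xi,\rho)=[\xi-\rho,\xi+\rho]\subset\mathbb{R}$. *)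

theory Defs
  imports "HOL-Analysis.Analysis"
begin

text \<open>A finitely supported non-negative measure on the plane is represented by its mass
function mu :: real * real => real; its support is the set of points of nonzero mass.\<close>

definition fsupp :: "(real \<times> real \<Rightarrow> real) \<Rightarrow> (real \<times> real) set" where
  "fsupp mu = {z. mu z \<noteq> 0}"

definition fs_measure_on_square :: "(real \<times> real \<Rightarrow> real) \<Rightarrow> bool" where
  "fs_measure_on_square mu \<longleftrightarrow> finite (fsupp mu) \<and> (\<forall>z. mu z \<ge> 0) \<and>
     fsupp mu \<subseteq> {-1..1} \<times> {-1..1}"

definition mass :: "(real \<times> real \<Rightarrow> real) \<Rightarrow> (real \<times> real) set \<Rightarrow> real" where
  "mass mu A = (\<Sum>z\<in>fsupp mu \<inter> A. mu z)"

definition Bint :: "real \<Rightarrow> real \<Rightarrow> real set" where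
  "Bint xi rho = {xi - rho .. xi + rho}"

definition Mmax :: "real \<Rightarrow> real \<Rightarrow> (real \<times> real \<Rightarrow> real) \<Rightarrow> real" where
  "Mmax R1 R2 mu = (SUP xi \<in> (UNIV :: (real \<times> real) set).
      mass mu (Bint (fst xi) (1 / R1) \<times> Bint (snd xi) (1 / R2)))"

end

theory Submission
  imports Defs
begin


lemma taylor_sep:
  fixes I :: "'i set" and g :: "'i \<Rightarrow> complex" and a b :: "'i \<Rightarrow> real"
  assumes fin: "finite I" and al: "\<alpha> \<ge> 0" "\<beta> \<ge> 0"
  and H: "\<And>n j. j \<le> n \<Longrightarrow> cmod (\<Sum>i\<in>I. g i * of_real (a i ^ j * b i ^ (n-j))) \<le> \<alpha>^j * \<beta>^(n-j) * X"
  shows "cmod (\<Sum>i\<in>I. g i * cis (a i + b i)) \<le> exp (\<alpha>+\<beta>) * X"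
proof -
  define T where "T n = (\<Sum>i\<in>I. g i * ((\<i> * of_real (a i + b i))^n /\<^sub>R fact n))" for n
  have sT: "T sums (\<Sum>i\<in>I. g i * cis (a i + b i))"
    unfolding T_def cis_conv_exp
    by (intro sums_sum sums_mult exp_converges)
  have Tn: "T n = (\<i>^n / of_real (fact n)) * (\<Sum>i\<in>I. g i * of_real ((a i + b i)^n))" for n
  proof -
    have e: "(\<i> * of_real t)^n /\<^sub>R fact n = (\<i>^n / of_real (fact n)) * of_real (t^n)" for t :: real
      by (simp add: power_mult_distrib scaleR_conv_of_real divide_inverse mult.commute)
    show ?thesis unfolding T_def e by (simp add: sum_distrib_left mult_ac)
  qed
  have bnd: "cmod (\<Sum>i\<in>I. g i * of_real ((a i + b i)^n)) \<le> (\<alpha>+\<beta>)^n * X" for n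
  proof -
    have "(\<Sum>i\<in>I. g i * of_real ((a i + b i)^n)) =
       (\<Sum>j\<le>n. of_nat (n choose j) * (\<Sum>i\<in>I. g i * of_real (a i ^ j * b i ^ (n-j))))"
      by (simp add: binomial_ring sum_distrib_left sum_distrib_right sum.swap[of _ I] mult_ac)
    also have "cmod \<dots> \<le> (\<Sum>j\<le>n. of_nat (n choose j) * (\<alpha>^j * \<beta>^(n-j) * X))"
      apply (rule order.trans[OF norm_sum sum_mono])
      apply (simp only: norm_mult norm_of_nat)
      by (rule mult_left_mono[OF H]) auto
    also have "\<dots> = (\<alpha>+\<beta>)^n * X"
      by (simp add: binomial_ring sum_distrib_right sum_distrib_left mult_ac)
    finally show ?thesis .
  qed
  have nT: "norm (T n) \<le> (\<alpha>+\<beta>)^n /\<^sub>R fact n * X" for n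
  proof -
    have "norm (T n) = cmod (\<Sum>i\<in>I. g i * of_real ((a i + b i)^n)) / fact n"
      unfolding Tn by (simp add: norm_mult norm_divide norm_power)
    also have "\<dots> \<le> (\<alpha>+\<beta>)^n * X / fact n" by (rule divide_right_mono[OF bnd]) simp
    finally show ?thesis by (simp add: divide_inverse mult_ac)
  qed
  have sB: "(\<lambda>n. (\<alpha>+\<beta>)^n /\<^sub>R fact n * X) sums (exp (\<alpha>+\<beta>) * X)"
    using sums_mult2[OF exp_converges[of "\<alpha>+\<beta>"]] by simp
  have snT: "summable (\<lambda>n. norm (T n))"
    by (rule summable_comparison_test[OF _ sums_summable[OF sB]]) (use nT in auto)
  have "cmod (\<Sum>i\<in>I. g i * cis (a i + b i)) = norm (suminf T)" using sums_unique[OF sT] by simp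
  also have "\<dots> \<le> (\<Sum>n. norm (T n))" by (rule summable_norm[OF snT])
  also have "\<dots> \<le> (\<Sum>n. (\<alpha>+\<beta>)^n /\<^sub>R fact n * X)"
    by (rule suminf_le[OF nT snT sums_summable[OF sB]])
  also have "\<dots> = exp (\<alpha>+\<beta>) * X" using sums_unique[OF sB] by simp
  finally show ?thesis .
qed



lemma cis_int_1: "cis (2 * pi * of_int k) = 1"
  by (rule cis_multiple_2pi) simp

lemma cis_eq_1_int: assumes "cis x = 1" shows "\<exists>n::int. x = 2 * pi * n"
proof -
  have "sin x = sin 0 \<and> cos x = cos 0" using assms by (auto simp: complex_eq_iff)
  then obtain n :: int where "x = 0 + 2*pi*n" using sin_cos_eq_iff by blast
  thus ?thesis by auto
qed

lemma geo_orth: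
  fixes P m a :: int assumes P: "P > 0"
  shows "(\<Sum>c\<in>{a..<a+P}. cis (2*pi*m*c/P)) = (if P dvd m then of_int P else 0)"
proof -
  have im: "{a..<a+P} = (\<lambda>j. a + int j) ` {..<nat P}"
    by (auto simp: image_iff intro!: bexI[of _ "nat (x - a)" for x]) 
  have inj: "inj_on (\<lambda>j. a + int j) {..<nat P}" by (auto simp: inj_on_def)
  define q where "q = cis (2*pi*m/P)"
  have tr: "cis (2*pi*m*(a + int j)/P) = cis (2*pi*m*a/P) * q^j" for j
  proof -
    have "q^j = cis (real j * (2*pi*m/P))" unfolding q_def by (rule Complex.DeMoivre)
    hence "cis (2*pi*m*a/P) * q^j = cis (2*pi*m*a/P + real j * (2*pi*m/P))" by (simp add: cis_mult)
    thus ?thesis using P by (simp add: field_simps)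
  qed
  have S: "(\<Sum>c\<in>{a..<a+P}. cis (2*pi*m*c/P)) = cis (2*pi*m*a/P) * (\<Sum>j<nat P. q^j)"
    unfolding im sum.reindex[OF inj] o_def tr by (simp add: sum_distrib_left)
  show ?thesis
  proof (cases "P dvd m")
    case True
    then obtain k where k: "m = P * k" by auto
    have "cis (2*pi*m*c/P) = 1" for c :: int
    proof -
      have "2*pi*m*c/P = 2*pi* of_int (k*c)" using P by (simp add: k field_simps)
      thus ?thesis using cis_int_1 by simp
    qed
    thus ?thesis using True P by simp
  next
    case False
    have q1: "q \<noteq> 1"
    proof
      assume "q = 1"
      then obtain n :: int where n: "2*pi*m/P = 2*pi*n" using cis_eq_1_int[of "2*pi*m/P"] \<open>q = 1\<close> unfolding q_def by blast
      hence "real_of_int m = real_of_int (P*n)" using P by (simp add: field_simps)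
      hence "m = P*n" by linarith
      thus False using False by auto
    qed
    have "q ^ nat P = 1" proof -
    have "q ^ nat P = cis (real (nat P) * (2*pi*m/P))" unfolding q_def by (rule Complex.DeMoivre)
    also have "real (nat P) * (2*pi*m/P) = 2*pi*m" using P by simp
    finally show ?thesis using cis_int_1[of m] by simp
  qed
    hence "(\<Sum>j<nat P. q^j) = 0" using geometric_sum[OF q1, of "nat P"] by simp
    thus ?thesis using S False by simp
  qed
qed

definition omg :: "int \<Rightarrow> int \<Rightarrow> int \<times> int \<Rightarrow> int \<times> int \<Rightarrow> complex" where
  "omg P1 P2 d k = cis (2*pi*(real_of_int (fst d) * real_of_int (fst k) / real_of_int P1 + real_of_int (snd d) * real_of_int (snd k) / real_of_int P2))"

lemma parseval:
  fixes P1 P2 a1 a2 :: int and D :: "(int \<times> int) set" and b :: "int \<times> int \<Rightarrow> complex"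
  assumes P: "P1 > 0" "P2 > 0" and fD: "finite D"
  and inj: "\<And>d d'. d \<in> D \<Longrightarrow> d' \<in> D \<Longrightarrow> P1 dvd (fst d - fst d') \<Longrightarrow> P2 dvd (snd d - snd d') \<Longrightarrow> d = d'"
  shows "(\<Sum>k\<in>{a1..<a1+P1}\<times>{a2..<a2+P2}. (cmod (\<Sum>d\<in>D. b d * omg P1 P2 d k))^2)
     = P1*P2*(\<Sum>d\<in>D. (cmod (b d))^2)"
proof -
  have o: "omg P1 P2 d k * cnj (omg P1 P2 d' k) =
     cis (2*pi*(fst d - fst d')* fst k/P1) * cis (2*pi*(snd d - snd d')* snd k/P2)" for d d' k
    unfolding omg_def cis_cnj cis_mult by (rule arg_cong[where f=cis]) (use P in \<open>simp add: field_simps\<close>)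
  have ks: "(\<Sum>k\<in>{a1..<a1+P1}\<times>{a2..<a2+P2}. omg P1 P2 d k * cnj (omg P1 P2 d' k))
      = (if d = d' then of_int (P1*P2) else 0)" if "d \<in> D" "d' \<in> D" for d d'
  proof -
    have "(\<Sum>k\<in>{a1..<a1+P1}\<times>{a2..<a2+P2}. omg P1 P2 d k * cnj (omg P1 P2 d' k))
       = (\<Sum>c1\<in>{a1..<a1+P1}. cis (2*pi*(fst d - fst d')*c1/P1)) * (\<Sum>c2\<in>{a2..<a2+P2}. cis (2*pi*(snd d - snd d')*c2/P2))"
      unfolding o sum_product sum.cartesian_product by (simp add: case_prod_beta)
    also have "\<dots> = (if d = d' then of_int (P1*P2) else 0)"
      using geo_orth[OF P(1), of "fst d - fst d'" a1] geo_orth[OF P(2), of "snd d - snd d'" a2]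
        inj[OF that] by auto
    finally show ?thesis .
  qed
  have "complex_of_real (\<Sum>k\<in>{a1..<a1+P1}\<times>{a2..<a2+P2}. (cmod (\<Sum>d\<in>D. b d * omg P1 P2 d k))^2)
     = (\<Sum>k\<in>{a1..<a1+P1}\<times>{a2..<a2+P2}. \<Sum>d\<in>D. \<Sum>d'\<in>D. b d * cnj (b d') * (omg P1 P2 d k * cnj (omg P1 P2 d' k)))"
    unfolding of_real_sum complex_norm_square cnj_sum sum_product by (simp add: mult_ac)
  also have "\<dots> = (\<Sum>d\<in>D. \<Sum>d'\<in>D. b d * cnj (b d') * (\<Sum>k\<in>{a1..<a1+P1}\<times>{a2..<a2+P2}. omg P1 P2 d k * cnj (omg P1 P2 d' k)))"
    by (simp add: sum_distrib_left sum.swap[of _ "{a1..<a1+P1}\<times>{a2..<a2+P2}"])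
  also have "\<dots> = (\<Sum>d\<in>D. \<Sum>d'\<in>D. b d * cnj (b d') * (if d = d' then of_int (P1*P2) else 0))"
    by (intro sum.cong refl) (simp add: ks)
  also have "\<dots> = (\<Sum>d\<in>D. b d * cnj (b d) * of_int (P1*P2))"
    by (simp add: fD if_distrib cong: if_cong)
  also have "\<dots> = complex_of_real (P1*P2*(\<Sum>d\<in>D. (cmod (b d))^2))"
    unfolding of_real_mult of_real_sum complex_norm_square by (simp add: sum_distrib_left mult_ac)
  finally show ?thesis by (simp only: of_real_eq_iff)
qed



lemma fs_finite: "fs_measure_on_square mu \<Longrightarrow> finite (fsupp mu)"
  by (simp add: fs_measure_on_square_def)
lemma fs_nonneg: "fs_measure_on_square mu \<Longrightarrow> mu z \<ge> 0"
  unfolding fs_measure_on_square_def by blast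
lemma fs_sq: "fs_measure_on_square mu \<Longrightarrow> z \<in> fsupp mu \<Longrightarrow> \<bar>fst z\<bar> \<le> 1 \<and> \<bar>snd z\<bar> \<le> 1"
  unfolding fs_measure_on_square_def by (cases z) (auto simp: abs_le_iff subset_iff)

lemma mass_le_total: assumes "fs_measure_on_square mu" shows "mass mu A \<le> sum mu (fsupp mu)"
  unfolding mass_def
  by (rule sum_mono2) (use assms fs_finite fs_nonneg in auto)

lemma Mmax_upper: assumes "fs_measure_on_square mu"
  shows "mass mu (Bint x (1/R1) \<times> Bint y (1/R2)) \<le> Mmax R1 R2 mu"
proof -
  have "mass mu (Bint (fst (x,y)) (1/R1) \<times> Bint (snd (x,y)) (1/R2)) \<le> Mmax R1 R2 mu"
    unfolding Mmax_def
    by (rule cSUP_upper) (use mass_le_total[OF assms] in \<open>auto intro!: bdd_above.I2\<close>)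
  thus ?thesis by simp
qed

lemma fiber_le_M:
  assumes mu: "fs_measure_on_square mu"
    and box: "\<And>z. z \<in> fsupp mu \<Longrightarrow> f z = d \<Longrightarrow> z \<in> Bint x (1/R1) \<times> Bint y (1/R2)"
  shows "(\<Sum>z\<in>{z\<in>fsupp mu. f z = d}. mu z) \<le> Mmax R1 R2 mu"
proof -
  have "(\<Sum>z\<in>{z\<in>fsupp mu. f z = d}. mu z) \<le> mass mu (Bint x (1/R1) \<times> Bint y (1/R2))"
    unfolding mass_def
    by (rule sum_mono2) (use mu fs_finite fs_nonneg box in auto)
  also have "\<dots> \<le> Mmax R1 R2 mu" by (rule Mmax_upper[OF mu])
  finally show ?thesis .
qed

lemma fibers_sq:
  assumes mu: "fs_measure_on_square mu"
    and box: "\<And>d. \<exists>x y. \<forall>z. z \<in> fsupp mu \<longrightarrow> f z = d \<longrightarrow> z \<in> Bint x (1/R1) \<times> Bint y (1/R2)"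
  shows "(\<Sum>d\<in>f ` fsupp mu. (\<Sum>z\<in>{z\<in>fsupp mu. f z = d}. mu z)^2) \<le> Mmax R1 R2 mu * sum mu (fsupp mu)"
proof -
  have "(\<Sum>d\<in>f ` fsupp mu. (\<Sum>z\<in>{z\<in>fsupp mu. f z = d}. mu z)^2)
      \<le> (\<Sum>d\<in>f ` fsupp mu. Mmax R1 R2 mu * (\<Sum>z\<in>{z\<in>fsupp mu. f z = d}. mu z))"
  proof (rule sum_mono)
    fix d
    obtain x y where b: "\<forall>z. z \<in> fsupp mu \<longrightarrow> f z = d \<longrightarrow> z \<in> Bint x (1/R1) \<times> Bint y (1/R2)"
      using box by blast
    have le: "(\<Sum>z\<in>{z\<in>fsupp mu. f z = d}. mu z) \<le> Mmax R1 R2 mu"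
      by (rule fiber_le_M[OF mu]) (use b in auto)
    have ge: "(\<Sum>z\<in>{z\<in>fsupp mu. f z = d}. mu z) \<ge> 0"
      by (rule sum_nonneg) (use fs_nonneg[OF mu] in auto)
    show "(\<Sum>z\<in>{z\<in>fsupp mu. f z = d}. mu z)^2 \<le> Mmax R1 R2 mu * (\<Sum>z\<in>{z\<in>fsupp mu. f z = d}. mu z)"
      unfolding power2_eq_square by (rule mult_right_mono[OF le ge])
  qed
  also have "\<dots> = Mmax R1 R2 mu * sum mu (fsupp mu)"
    by (simp add: sum_distrib_left[symmetric] sum.image_gen[OF fs_finite[OF mu], symmetric])
  finally show ?thesis .
qed



lemma cmod_CS:
  fixes x y :: "'k \<Rightarrow> complex"
  shows "cmod (\<Sum>k\<in>K. x k * y k) \<le> sqrt (\<Sum>k\<in>K. (cmod (x k))^2) * sqrt (\<Sum>k\<in>K. (cmod (y k))^2)"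
proof -
  have "cmod (\<Sum>k\<in>K. x k * y k) \<le> (\<Sum>k\<in>K. cmod (x k) * cmod (y k))"
    by (rule order.trans[OF norm_sum]) (simp add: norm_mult)
  also have "\<dots> \<le> sqrt ((\<Sum>k\<in>K. cmod (x k) * cmod (y k))^2)" by simp
  also have "\<dots> \<le> sqrt ((\<Sum>k\<in>K. (cmod (x k))^2) * (\<Sum>k\<in>K. (cmod (y k))^2))"
    by (rule real_sqrt_le_mono[OF Cauchy_Schwarz_ineq_sum])
  finally show ?thesis by (simp add: real_sqrt_mult)
qed

lemma cmod_CS_weight:
  fixes x y :: "'k \<Rightarrow> complex" and c :: "'k \<Rightarrow> real"
  assumes "\<And>k. k \<in> K \<Longrightarrow> \<bar>c k\<bar> \<le> C"
  shows "cmod (\<Sum>k\<in>K. x k * (of_real (c k) * y k)) \<le> sqrt (\<Sum>k\<in>K. (cmod (x k))^2) * (C * sqrt (\<Sum>k\<in>K. (cmod (y k))^2))"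
proof -
  have C0: "C \<ge> 0 \<or> K = {}" using assms by force
  have 1: "cmod (\<Sum>k\<in>K. x k * (of_real (c k) * y k)) \<le> sqrt (\<Sum>k\<in>K. (cmod (x k))^2) * sqrt (\<Sum>k\<in>K. (cmod (of_real (c k) * y k))^2)"
    by (rule cmod_CS)
  have "sqrt (\<Sum>k\<in>K. (cmod (of_real (c k) * y k))^2) \<le> sqrt (\<Sum>k\<in>K. C^2 * (cmod (y k))^2)"
    apply (rule real_sqrt_le_mono, rule sum_mono)
    apply (simp add: norm_mult power_mult_distrib)
    apply (rule mult_right_mono)
    subgoal for k using power_mono[OF assms[of k] abs_ge_zero, of 2] by simp
    by simp
  also have "\<dots> = \<bar>C\<bar> * sqrt (\<Sum>k\<in>K. (cmod (y k))^2)"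
    by (simp add: sum_distrib_left[symmetric] real_sqrt_mult)
  finally have 2: "sqrt (\<Sum>k\<in>K. (cmod (of_real (c k) * y k))^2) \<le> \<bar>C\<bar> * sqrt (\<Sum>k\<in>K. (cmod (y k))^2)" .
  show ?thesis
  proof (cases "K = {}")
    case False
    hence "\<bar>C\<bar> = C" using C0 by simp
    have "sqrt (\<Sum>k\<in>K. (cmod (x k))^2) * sqrt (\<Sum>k\<in>K. (cmod (of_real (c k) * y k))^2)
       \<le> sqrt (\<Sum>k\<in>K. (cmod (x k))^2) * (C * sqrt (\<Sum>k\<in>K. (cmod (y k))^2))"
      by (rule mult_left_mono) (use 2 \<open>\<bar>C\<bar> = C\<close> in \<open>auto intro: sum_nonneg\<close>)
    thus ?thesis using 1 by linarith
  qed simp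
qed



lemma Lbound:
  fixes R1 R2 :: real and mu :: "real \<times> real \<Rightarrow> real" and a :: "real \<times> real \<Rightarrow> complex"
    and K :: "(int \<times> int) set"
  assumes R: "R1 \<ge> 1" "R2 \<ge> 1" and mu: "fs_measure_on_square mu"
    and ab: "\<And>z. z \<in> fsupp mu \<Longrightarrow> cmod (a z) \<le> mu z"
    and fK: "finite K" and Kb: "\<And>k. k \<in> K \<Longrightarrow> \<bar>fst k\<bar> \<le> \<lceil>R1\<rceil> \<and> \<bar>snd k\<bar> \<le> \<lceil>R2\<rceil>"
  shows "(\<Sum>k\<in>K. (cmod (\<Sum>z\<in>fsupp mu. a z * cis (fst z * of_int (fst k) + snd z * of_int (snd k))))^2)
    \<le> 144 * exp pi * (R1 * R2) * (Mmax R1 R2 mu * sum mu (fsupp mu))"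
proof -
  define S where "S = fsupp mu"
  have fS: "finite S" using fs_finite[OF mu] S_def by simp
  define M1 where "M1 = \<lceil>R1\<rceil>"
  define M2 where "M2 = \<lceil>R2\<rceil>"
  define P1 where "P1 = 4*M1+4"
  define P2 where "P2 = 4*M2+4"
  have M1R: "R1 \<le> M1" "M1 \<le> R1 + 1" unfolding M1_def by linarith+
  have M2R: "R2 \<le> M2" "M2 \<le> R2 + 1" unfolding M2_def by linarith+
  have P1p: "P1 > 0" "real_of_int P1 \<ge> 4*R1" "real_of_int P1 \<le> 12*R1" "4 * real_of_int M1 \<le> P1"
    unfolding P1_def using M1R R by auto
  have P2p: "P2 > 0" "real_of_int P2 \<ge> 4*R2" "real_of_int P2 \<le> 12*R2" "4 * real_of_int M2 \<le> P2"
    unfolding P2_def using M2R R by auto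
  define A where "A k = (\<Sum>z\<in>S. a z * cis (fst z * of_int (fst k) + snd z * of_int (snd k)))" for k :: "int \<times> int"
  define Q where "Q = (\<Sum>k\<in>K. (cmod (A k))^2)"
  define Mm where "Mm = Mmax R1 R2 mu"
  define mt where "mt = sum mu S"
  define dd where "dd z = (round (fst z * P1/(2*pi)), round (snd z * P2/(2*pi)))" for z :: "real \<times> real"
  define s1 where "s1 z = fst z - 2*pi* of_int (fst (dd z))/P1" for z
  define s2 where "s2 z = snd z - 2*pi* of_int (snd (dd z))/P2" for z
  have s1b: "\<bar>s1 z\<bar> \<le> pi/P1" for z
  proof -
    have "\<bar>of_int (fst (dd z)) - fst z * P1/(2*pi)\<bar> \<le> 1/2"
      unfolding dd_def fst_conv by (rule of_int_round_abs_le)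
    hence "\<bar>of_int (fst (dd z)) - fst z * P1/(2*pi)\<bar> * (2*pi/P1) \<le> 1/2 * (2*pi/P1)"
      by (rule mult_right_mono) (use P1p in simp)
    moreover have "\<bar>of_int (fst (dd z)) - fst z * P1/(2*pi)\<bar> * (2*pi/P1) = \<bar>s1 z\<bar>"
      unfolding s1_def using P1p pi_gt_zero by (simp add: abs_mult[symmetric] field_simps abs_minus_commute)
    ultimately show ?thesis by simp
  qed
  have s2b: "\<bar>s2 z\<bar> \<le> pi/P2" for z
  proof -
    have "\<bar>of_int (snd (dd z)) - snd z * P2/(2*pi)\<bar> \<le> 1/2"
      unfolding dd_def snd_conv by (rule of_int_round_abs_le)
    hence "\<bar>of_int (snd (dd z)) - snd z * P2/(2*pi)\<bar> * (2*pi/P2) \<le> 1/2 * (2*pi/P2)"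
      by (rule mult_right_mono) (use P2p in simp)
    moreover have "\<bar>of_int (snd (dd z)) - snd z * P2/(2*pi)\<bar> * (2*pi/P2) = \<bar>s2 z\<bar>"
      unfolding s2_def using P2p pi_gt_zero by (simp add: abs_mult[symmetric] field_simps abs_minus_commute)
    ultimately show ?thesis by simp
  qed
  have phase: "cis (fst z * of_int (fst k) + snd z * of_int (snd k)) =
      omg P1 P2 (dd z) k * cis (s1 z * of_int (fst k) + s2 z * of_int (snd k))" for z k
    unfolding omg_def cis_mult
    by (rule arg_cong[where f=cis]) (use P1p P2p in \<open>simp add: s1_def s2_def field_simps\<close>)
  define cA where "cA k = cnj (A k)" for k
  define g where "g i = cA (fst i) * a (snd i) * omg P1 P2 (dd (snd i)) (fst i)" for i :: "(int \<times> int) \<times> (real \<times> real)"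
  define af where "af i = s1 (snd i) * of_int (fst (fst i))" for i :: "(int \<times> int) \<times> (real \<times> real)"
  define bf where "bf i = s2 (snd i) * of_int (snd (fst i))" for i :: "(int \<times> int) \<times> (real \<times> real)"
  have Qc: "complex_of_real Q = (\<Sum>i\<in>K\<times>S. g i * cis (af i + bf i))"
  proof -
    have "complex_of_real Q = (\<Sum>k\<in>K. cA k * A k)"
      unfolding Q_def of_real_sum complex_norm_square cA_def by (simp add: mult.commute)
    also have "\<dots> = (\<Sum>k\<in>K. \<Sum>z\<in>S. g (k,z) * cis (af (k,z) + bf (k,z)))"
      unfolding A_def[of k for k] phase g_def af_def bf_def
      by (simp add: sum_distrib_left mult_ac A_def)
    also have "\<dots> = (\<Sum>i\<in>K\<times>S. g i * cis (af i + bf i))"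
      by (simp add: sum.cartesian_product case_prod_beta)
    finally show ?thesis .
  qed
  have Q0: "Q \<ge> 0" unfolding Q_def by (rule sum_nonneg) auto
  define X where "X = sqrt Q * (sqrt (P1*P2) * sqrt (Mm*mt))"
  have H: "cmod (\<Sum>i\<in>K\<times>S. g i * of_real (af i ^ j * bf i ^ (n-j))) \<le> (pi/4)^j * (pi/4)^(n-j) * X"
    if jn: "j \<le> n" for n j
  proof -
    define F where "F k = (\<Sum>z\<in>S. a z * of_real (s1 z ^ j * s2 z ^ (n-j)) * omg P1 P2 (dd z) k)" for k
    define c where "c k = real_of_int (fst k) ^ j * real_of_int (snd k) ^ (n-j)" for k :: "int \<times> int"
    have e1: "(\<Sum>i\<in>K\<times>S. g i * of_real (af i ^ j * bf i ^ (n-j))) = (\<Sum>k\<in>K. cA k * (of_real (c k) * F k))"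
    proof -
      have cp: "(\<Sum>i\<in>K\<times>S. h i) = (\<Sum>k\<in>K. \<Sum>z\<in>S. h (k,z))" for h :: "_ \<Rightarrow> complex"
        by (simp add: sum.cartesian_product case_prod_beta)
      show ?thesis unfolding cp g_def af_def bf_def F_def c_def
        by (simp add: sum_distrib_left power_mult_distrib mult_ac)
    qed
    have cb: "\<bar>c k\<bar> \<le> real_of_int M1 ^ j * real_of_int M2 ^ (n-j)" if "k \<in> K" for k
    proof -
      have "\<bar>real_of_int (fst k)\<bar> \<le> M1" "\<bar>real_of_int (snd k)\<bar> \<le> M2"
        using Kb[OF that] unfolding M1_def M2_def by linarith+
      thus ?thesis unfolding c_def abs_mult power_abs
        by (intro mult_mono power_mono) auto
    qed
    have CS: "cmod (\<Sum>k\<in>K. cA k * (of_real (c k) * F k)) \<le>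
        sqrt (\<Sum>k\<in>K. (cmod (cA k))^2) * (real_of_int M1 ^ j * real_of_int M2 ^ (n-j) * sqrt (\<Sum>k\<in>K. (cmod (F k))^2))"
      by (rule cmod_CS_weight) (use cb in auto)
    have cAQ: "(\<Sum>k\<in>K. (cmod (cA k))^2) = Q" unfolding cA_def Q_def by simp
    define b where "b d = (\<Sum>z\<in>{z\<in>S. dd z = d}. a z * of_real (s1 z ^ j * s2 z ^ (n-j)))" for d
    have Fb: "F k = (\<Sum>d\<in>dd`S. b d * omg P1 P2 d k)" for k
    proof -
      have "F k = (\<Sum>d\<in>dd`S. \<Sum>z\<in>{z\<in>S. dd z = d}. a z * of_real (s1 z ^ j * s2 z ^ (n-j)) * omg P1 P2 (dd z) k)"
        unfolding F_def by (rule sum.image_gen[OF fS])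
      also have "\<dots> = (\<Sum>d\<in>dd`S. b d * omg P1 P2 d k)"
        unfolding b_def sum_distrib_right by (intro sum.cong refl) auto
      finally show ?thesis .
    qed
    define B where "B = {-M1..<-M1+P1}\<times>{-M2..<-M2+P2}"
    have KB: "K \<subseteq> B" unfolding B_def P1_def P2_def using Kb unfolding M1_def M2_def
      by (force simp: abs_le_iff)
    have injd: "d = d'" if dS: "d \<in> dd`S" "d' \<in> dd`S" and dv: "P1 dvd (fst d - fst d')" "P2 dvd (snd d - snd d')" for d d'
    proof -
      have gen: "\<bar>of_int (round (x * P/(2*pi)))\<bar> \<le> real_of_int P/4 + 1/2" if "\<bar>x\<bar> \<le> 1" "P > 0" for x :: real and P :: int
      proof -
        have "\<bar>x * P/(2*pi)\<bar> \<le> 1 * P/(2*2)"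
          unfolding abs_divide abs_mult using that pi_ge_two
          by (intro frac_le mult_mono) auto
        thus ?thesis using of_int_round_abs_le[of "x * P/(2*pi)"] by linarith
      qed
      obtain z z' where zz: "z \<in> S" "z' \<in> S" "d = dd z" "d' = dd z'" using dS by blast
      have zb: "\<bar>fst z\<bar> \<le> 1" "\<bar>snd z\<bar> \<le> 1" "\<bar>fst z'\<bar> \<le> 1" "\<bar>snd z'\<bar> \<le> 1"
        using fs_sq[OF mu] zz unfolding S_def by auto
      have b1: "\<bar>real_of_int (fst d)\<bar> \<le> real_of_int P1/4 + 1/2" "\<bar>real_of_int (fst d')\<bar> \<le> real_of_int P1/4 + 1/2"
        "\<bar>real_of_int (snd d)\<bar> \<le> real_of_int P2/4 + 1/2" "\<bar>real_of_int (snd d')\<bar> \<le> real_of_int P2/4 + 1/2"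
        unfolding zz dd_def fst_conv snd_conv using gen zb P1p(1) P2p(1) by auto
      have P8: "real_of_int P1 \<ge> 8" "real_of_int P2 \<ge> 8" unfolding P1_def P2_def M1_def M2_def using R by linarith+
      have "fst d - fst d' = 0"
      proof (rule ccontr)
        assume "fst d - fst d' \<noteq> 0"
        from dvd_imp_le_int[OF this dv(1)] have "real_of_int \<bar>P1\<bar> \<le> \<bar>real_of_int (fst d - fst d')\<bar>" by linarith
        thus False using b1 P8 P1p(1) by linarith
      qed
      moreover have "snd d - snd d' = 0"
      proof (rule ccontr)
        assume "snd d - snd d' \<noteq> 0"
        from dvd_imp_le_int[OF this dv(2)] have "real_of_int \<bar>P2\<bar> \<le> \<bar>real_of_int (snd d - snd d')\<bar>" by linarith
        thus False using b1 P8 P2p(1) by linarith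
      qed
      ultimately show ?thesis by (simp add: prod_eq_iff)
    qed
    have Fsum: "(\<Sum>k\<in>K. (cmod (F k))^2) \<le> P1*P2*(\<Sum>d\<in>dd`S. (cmod (b d))^2)"
    proof -
      have "(\<Sum>k\<in>K. (cmod (F k))^2) \<le> (\<Sum>k\<in>B. (cmod (F k))^2)"
        by (rule sum_mono2) (use KB in \<open>auto simp: B_def\<close>)
      also have "\<dots> = P1*P2*(\<Sum>d\<in>dd`S. (cmod (b d))^2)"
        unfolding Fb B_def by (rule parseval[OF P1p(1) P2p(1)]) (use fS injd in auto)
      finally show ?thesis .
    qed
    define \<rho> where "\<rho> = (pi/P1)^j * (pi/P2)^(n-j)"
    have rho0: "\<rho> \<ge> 0" unfolding \<rho>_def using P1p P2p by simp
    have bb: "cmod (b d) \<le> \<rho> * (\<Sum>z\<in>{z\<in>S. dd z = d}. mu z)" for d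
      unfolding b_def sum_distrib_left
    proof (rule order.trans[OF norm_sum sum_mono])
      fix z
      have "\<bar>s1 z ^ j * s2 z ^ (n-j)\<bar> \<le> \<rho>" unfolding \<rho>_def abs_mult power_abs
        by (intro mult_mono power_mono s1b s2b) (use P1p P2p in auto)
      moreover have "cmod (a z) \<le> mu z" if "z \<in> S" using ab that S_def by simp
      ultimately show "cmod (a z * of_real (s1 z ^ j * s2 z ^ (n-j))) \<le> \<rho> * mu z" if "z \<in> {z\<in>S. dd z = d}"
      proof -
        have "cmod (a z * of_real (s1 z ^ j * s2 z ^ (n-j))) = cmod (a z) * \<bar>s1 z ^ j * s2 z ^ (n-j)\<bar>"
          by (simp only: norm_mult norm_of_real)
        also have "\<dots> \<le> mu z * \<rho>" using that \<open>\<bar>s1 z ^ j * s2 z ^ (n-j)\<bar> \<le> \<rho>\<close> \<open>z \<in> S \<Longrightarrow> cmod (a z) \<le> mu z\<close>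
          by (intro mult_mono) (auto simp: fs_nonneg[OF mu])
        finally show ?thesis by (simp add: mult.commute)
      qed
    qed
    have boxes: "\<exists>x y. \<forall>z. z \<in> fsupp mu \<longrightarrow> dd z = d \<longrightarrow> z \<in> Bint x (1/R1) \<times> Bint y (1/R2)" for d
    proof (intro exI allI impI)
      fix z assume "dd z = d"
      have "pi / P1 \<le> 1/R1" proof -
        have "R1*pi \<le> R1*4" using pi_less_4 R by (intro mult_left_mono) auto
        hence "R1*pi \<le> P1" using P1p by linarith
        thus ?thesis using P1p R by (simp add: field_simps)
      qed
      moreover have "pi / P2 \<le> 1/R2" proof -
        have "R2*pi \<le> R2*4" using pi_less_4 R by (intro mult_left_mono) auto
        hence "R2*pi \<le> P2" using P2p by linarith
        thus ?thesis using P2p R by (simp add: field_simps)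
      qed
      ultimately show "z \<in> Bint (2*pi* of_int (fst d)/P1) (1/R1) \<times> Bint (2*pi* of_int (snd d)/P2) (1/R2)"
        using s1b[of z] s2b[of z] \<open>dd z = d\<close> unfolding Bint_def s1_def s2_def
        by (cases z) (auto simp: abs_le_iff)
    qed
    have bsum: "(\<Sum>d\<in>dd`S. (cmod (b d))^2) \<le> \<rho>^2 * (Mm * mt)"
    proof -
      have "(\<Sum>d\<in>dd`S. (cmod (b d))^2) \<le> (\<Sum>d\<in>dd`S. \<rho>^2 * (\<Sum>z\<in>{z\<in>S. dd z = d}. mu z)^2)"
        unfolding power_mult_distrib[symmetric] by (intro sum_mono power_mono bb) auto
      also have "\<dots> = \<rho>^2 * (\<Sum>d\<in>dd`S. (\<Sum>z\<in>{z\<in>S. dd z = d}. mu z)^2)"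
        by (simp add: sum_distrib_left)
      also have "\<dots> \<le> \<rho>^2 * (Mm * mt)"
        unfolding Mm_def mt_def S_def by (intro mult_left_mono fibers_sq[OF mu] boxes) auto
      finally show ?thesis .
    qed
    have Mm0: "Mm \<ge> 0"
    proof -
      have "0 \<le> mass mu (Bint 0 (1/R1) \<times> Bint 0 (1/R2))" unfolding mass_def
        by (rule sum_nonneg) (use fs_nonneg[OF mu] in auto)
      thus ?thesis using Mmax_upper[OF mu] unfolding Mm_def by (meson order.trans)
    qed
    have mt0: "mt \<ge> 0" unfolding mt_def by (rule sum_nonneg) (use fs_nonneg[OF mu] in auto)
    define W where "W = sqrt (P1*P2) * sqrt (Mm*mt)"
    have W0: "W \<ge> 0" unfolding W_def using P1p P2p Mm0 mt0 by simp
    have F2: "sqrt (\<Sum>k\<in>K. (cmod (F k))^2) \<le> \<rho> * W"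
    proof -
      have "(\<Sum>k\<in>K. (cmod (F k))^2) \<le> P1*P2*(\<rho>^2 * (Mm * mt))"
      proof -
        have "real_of_int (P1*P2)*(\<Sum>d\<in>dd`S. (cmod (b d))^2) \<le> real_of_int (P1*P2)*(\<rho>^2 * (Mm * mt))"
          by (rule mult_left_mono[OF bsum]) (use P1p P2p in simp)
        thus ?thesis using Fsum by simp
      qed
      hence "sqrt (\<Sum>k\<in>K. (cmod (F k))^2) \<le> sqrt (P1*P2*(\<rho>^2 * (Mm * mt)))"
        by (rule real_sqrt_le_mono)
      also have "\<dots> = \<rho> * W" unfolding W_def real_sqrt_mult using rho0 by simp
      finally show ?thesis .
    qed
    have MR: "real_of_int M1 ^ j * real_of_int M2 ^ (n-j) * \<rho> \<le> (pi/4)^j * (pi/4)^(n-j)"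
    proof -
      have M0: "real_of_int M1 \<ge> 0" "real_of_int M2 \<ge> 0" using M1R M2R R by linarith+
      have q1: "real_of_int M1 * (pi/P1) \<le> pi/4" using P1p pi_gt_zero M0
        by (simp add: field_simps mult_left_mono)
      have q2: "real_of_int M2 * (pi/P2) \<le> pi/4" using P2p pi_gt_zero M0
        by (simp add: field_simps mult_left_mono)
      have "real_of_int M1 ^ j * real_of_int M2 ^ (n-j) * \<rho> = (real_of_int M1 * (pi/P1))^j * (real_of_int M2 * (pi/P2))^(n-j)"
        unfolding \<rho>_def power_mult_distrib by (simp add: mult_ac)
      also have "\<dots> \<le> (pi/4)^j * (pi/4)^(n-j)"
        using q1 q2 M0 P1p P2p by (intro mult_mono power_mono) auto
      finally show ?thesis .
    qed
    have "cmod (\<Sum>i\<in>K\<times>S. g i * of_real (af i ^ j * bf i ^ (n-j)))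
        \<le> sqrt Q * (real_of_int M1 ^ j * real_of_int M2 ^ (n-j) * sqrt (\<Sum>k\<in>K. (cmod (F k))^2))"
      using CS unfolding e1 cAQ .
    also have "\<dots> \<le> sqrt Q * (real_of_int M1 ^ j * real_of_int M2 ^ (n-j) * (\<rho> * W))"
      using F2 M1R M2R R Q0 by (intro mult_left_mono) auto
    also have "\<dots> = sqrt Q * ((real_of_int M1 ^ j * real_of_int M2 ^ (n-j) * \<rho>) * W)" by (simp add: mult_ac)
    also have "\<dots> \<le> sqrt Q * (((pi/4)^j * (pi/4)^(n-j)) * W)"
      using MR W0 Q0 by (intro mult_left_mono mult_right_mono) auto
    also have "\<dots> = (pi/4)^j * (pi/4)^(n-j) * X" unfolding X_def W_def by (simp add: mult_ac)
    finally show ?thesis .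
  qed
  have T: "cmod (\<Sum>i\<in>K\<times>S. g i * cis (af i + bf i)) \<le> exp (pi/4+pi/4) * X"
    by (rule taylor_sep) (use fK fS H in auto)
  hence QX: "Q \<le> exp (pi/2) * X" unfolding Qc[symmetric] using Q0 by simp
  have Mm0: "Mm \<ge> 0"
  proof -
    have "0 \<le> mass mu (Bint 0 (1/R1) \<times> Bint 0 (1/R2))" unfolding mass_def
      by (rule sum_nonneg) (use fs_nonneg[OF mu] in auto)
    thus ?thesis using Mmax_upper[OF mu] unfolding Mm_def by (meson order.trans)
  qed
  have mt0: "mt \<ge> 0" unfolding mt_def by (rule sum_nonneg) (use fs_nonneg[OF mu] in auto)
  define W where "W = sqrt (P1*P2) * sqrt (Mm*mt)"
  have W0: "W \<ge> 0" unfolding W_def using P1p P2p Mm0 mt0 by simp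
  have QW: "Q \<le> exp pi * (P1*P2) * (Mm*mt)"
  proof (cases "Q = 0")
    case True thus ?thesis using P1p P2p Mm0 mt0 by simp
  next
    case False
    hence sQ: "sqrt Q > 0" using Q0 by simp
    have "sqrt Q * sqrt Q \<le> sqrt Q * (exp (pi/2) * W)" using QX Q0 unfolding X_def W_def
      by (simp add: mult_ac)
    hence "sqrt Q \<le> exp (pi/2) * W" by (rule mult_left_le_imp_le) (rule sQ)
    hence "(sqrt Q)^2 \<le> (exp (pi/2) * W)^2" using sQ by (intro power_mono) auto
    also have "(exp (pi/2) * W)^2 = exp pi * (P1*P2) * (Mm*mt)"
      unfolding W_def power_mult_distrib using P1p P2p Mm0 mt0
      by (simp add: exp_double[symmetric])
    finally show ?thesis using Q0 by simp
  qed
  also have "\<dots> \<le> exp pi * (144 * (R1 * R2)) * (Mm*mt)"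
  proof -
    have "real_of_int P1 * real_of_int P2 \<le> (12*R1) * (12*R2)"
      using P1p P2p by (intro mult_mono) auto
    thus ?thesis using Mm0 mt0 by (intro mult_right_mono mult_left_mono) auto
  qed
  finally show ?thesis unfolding Q_def A_def S_def Mm_def mt_def by (simp add: mult_ac)
qed


lemma round_bound: fixes x R :: real assumes "\<bar>x\<bar> \<le> R" shows "\<bar>round x\<bar> \<le> \<lceil>R\<rceil>"
proof -
  have "of_int (round x) \<le> x + 1/2" "of_int (round x) \<ge> x - 1/2" by (rule of_int_round_le, rule of_int_round_ge)
  moreover have "R \<le> of_int \<lceil>R\<rceil>" by (rule le_of_int_ceiling)
  ultimately have "real_of_int (round x) < of_int \<lceil>R\<rceil> + 1" "real_of_int (round x) > - of_int \<lceil>R\<rceil> - 1"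
    using assms by linarith+
  hence "round x < \<lceil>R\<rceil> + 1" "round x > - \<lceil>R\<rceil> - 1" by linarith+
  thus ?thesis by linarith
qed

lemma Mmax_nonneg: assumes mu: "fs_measure_on_square mu" shows "Mmax R1 R2 mu \<ge> 0"
proof -
  have "0 \<le> mass mu (Bint 0 (1/R1) \<times> Bint 0 (1/R2))" unfolding mass_def
    by (rule sum_nonneg) (use fs_nonneg[OF mu] in auto)
  thus ?thesis using Mmax_upper[OF mu] by (meson order.trans)
qed

lemma tot_nonneg: assumes mu: "fs_measure_on_square mu" shows "sum mu (fsupp mu) \<ge> 0"
  by (rule sum_nonneg) (use fs_nonneg[OF mu] in auto)

lemma main_bound:
  fixes R1 R2 :: real and mu nu :: "real \<times> real \<Rightarrow> real"
  assumes R: "R1 \<ge> 1" "R2 \<ge> 1" and mu: "fs_measure_on_square mu" and nu: "fs_measure_on_square nu"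
  shows "cmod (\<Sum>z\<in>fsupp mu. \<Sum>w\<in>fsupp nu.
        cis (R1 * fst z * fst w + R2 * snd z * snd w) * complex_of_real (mu z * nu w))
    \<le> exp 1 * (sqrt (144 * exp pi * (R1 * R2) * (Mmax R1 R2 mu * sum mu (fsupp mu))) * sqrt (Mmax R1 R2 nu * sum nu (fsupp nu)))"
proof -
  define S where "S = fsupp mu"
  define T where "T = fsupp nu"
  have fS: "finite S" using fs_finite[OF mu] S_def by simp
  have fT: "finite T" using fs_finite[OF nu] T_def by simp
  define L where "L = 144 * exp pi * (R1 * R2) * (Mmax R1 R2 mu * sum mu (fsupp mu))"
  define N where "N = Mmax R1 R2 nu * sum nu (fsupp nu)"
  define X where "X = sqrt L * sqrt N"
  have N0: "N \<ge> 0" unfolding N_def using Mmax_nonneg[OF nu] tot_nonneg[OF nu] by simp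
  define kk where "kk w = (round (R1 * fst w), round (R2 * snd w))" for w :: "real \<times> real"
  define h1 where "h1 w = R1 * fst w - of_int (fst (kk w))" for w
  define h2 where "h2 w = R2 * snd w - of_int (snd (kk w))" for w
  have h1b: "\<bar>h1 w\<bar> \<le> 1/2" for w unfolding h1_def kk_def fst_conv
    using of_int_round_abs_le[of "R1 * fst w"] by linarith
  have h2b: "\<bar>h2 w\<bar> \<le> 1/2" for w unfolding h2_def kk_def snd_conv
    using of_int_round_abs_le[of "R2 * snd w"] by linarith
  define g where "g i = complex_of_real (mu (fst i) * nu (snd i)) *
     cis (fst (fst i) * of_int (fst (kk (snd i))) + snd (fst i) * of_int (snd (kk (snd i))))"
    for i :: "(real \<times> real) \<times> (real \<times> real)"
  define af where "af i = fst (fst i) * h1 (snd i)" for i :: "(real \<times> real) \<times> (real \<times> real)"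
  define bf where "bf i = snd (fst i) * h2 (snd i)" for i :: "(real \<times> real) \<times> (real \<times> real)"
  have Sc: "(\<Sum>z\<in>fsupp mu. \<Sum>w\<in>fsupp nu.
        cis (R1 * fst z * fst w + R2 * snd z * snd w) * complex_of_real (mu z * nu w))
      = (\<Sum>i\<in>S\<times>T. g i * cis (af i + bf i))"
  proof -
    have ph: "cis (R1 * fst z * fst w + R2 * snd z * snd w) * complex_of_real (mu z * nu w) = g (z,w) * cis (af (z,w) + bf (z,w))" for z w
      unfolding g_def af_def bf_def h1_def h2_def fst_conv snd_conv
      by (simp add: cis_mult[symmetric, symmetric] mult_ac cis_mult algebra_simps)
    show ?thesis unfolding ph S_def T_def by (simp add: sum.cartesian_product case_prod_beta)
  qed
  have H: "cmod (\<Sum>i\<in>S\<times>T. g i * of_real (af i ^ j * bf i ^ (n-j))) \<le> (1/2)^j * (1/2)^(n-j) * X"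
    if jn: "j \<le> n" for n j
  proof -
    define a where "a z = complex_of_real (mu z * fst z ^ j * snd z ^ (n-j))" for z :: "real \<times> real"
    define A where "A k = (\<Sum>z\<in>S. a z * cis (fst z * of_int (fst k) + snd z * of_int (snd k)))" for k :: "int \<times> int"
    define B where "B d = (\<Sum>w\<in>{w\<in>T. kk w = d}. complex_of_real (nu w * h1 w ^ j * h2 w ^ (n-j)))" for d
    have e1: "(\<Sum>i\<in>S\<times>T. g i * of_real (af i ^ j * bf i ^ (n-j))) = (\<Sum>d\<in>kk`T. B d * A d)"
    proof -
      have cp: "(\<Sum>i\<in>S\<times>T. f i) = (\<Sum>w\<in>T. \<Sum>z\<in>S. f (z,w))" for f :: "_ \<Rightarrow> complex"
      proof -
        have "(\<Sum>i\<in>S\<times>T. f i) = (\<Sum>z\<in>S. \<Sum>w\<in>T. f (z,w))"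
          by (simp add: sum.cartesian_product case_prod_beta)
        thus ?thesis by (simp add: sum.swap[of _ S])
      qed
      have "(\<Sum>i\<in>S\<times>T. g i * of_real (af i ^ j * bf i ^ (n-j)))
          = (\<Sum>w\<in>T. complex_of_real (nu w * h1 w ^ j * h2 w ^ (n-j)) * A (kk w))"
        unfolding cp g_def af_def bf_def A_def a_def
        by (simp add: sum_distrib_left power_mult_distrib mult_ac)
      also have "\<dots> = (\<Sum>d\<in>kk`T. \<Sum>w\<in>{w\<in>T. kk w = d}. complex_of_real (nu w * h1 w ^ j * h2 w ^ (n-j)) * A (kk w))"
        by (rule sum.image_gen[OF fT])
      also have "\<dots> = (\<Sum>d\<in>kk`T. B d * A d)"
        unfolding B_def sum_distrib_right by (intro sum.cong refl) auto
      finally show ?thesis .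
    qed
    have A2: "(\<Sum>d\<in>kk`T. (cmod (A d))^2) \<le> L"
      unfolding A_def L_def S_def T_def
    proof (rule Lbound[OF R mu])
      show "cmod (a z) \<le> mu z" if "z \<in> fsupp mu" for z
      proof -
        have "\<bar>fst z ^ j * snd z ^ (n-j)\<bar> \<le> 1" using fs_sq[OF mu that]
          unfolding abs_mult power_abs by (intro mult_le_one power_le_one) auto
        hence "mu z * \<bar>fst z ^ j * snd z ^ (n-j)\<bar> \<le> mu z * 1"
          by (intro mult_left_mono) (use fs_nonneg[OF mu] in auto)
        thus ?thesis unfolding a_def norm_of_real using fs_nonneg[OF mu, of z] by (simp add: abs_mult mult.assoc)
      qed
      show "finite (kk ` fsupp nu)" using fT T_def by simp
      show "\<bar>fst k\<bar> \<le> \<lceil>R1\<rceil> \<and> \<bar>snd k\<bar> \<le> \<lceil>R2\<rceil>" if kin: "k \<in> kk ` fsupp nu" for k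
      proof -
        obtain w where w: "w \<in> fsupp nu" "k = kk w" using kin by blast
        have "\<bar>R1 * fst w\<bar> \<le> R1" "\<bar>R2 * snd w\<bar> \<le> R2" using fs_sq[OF nu w(1)] R
          by (auto simp: abs_mult intro: mult_left_le)
        thus ?thesis unfolding w kk_def by (auto intro: round_bound)
      qed
    qed
    define \<rho> where "\<rho> = (1/2::real)^j * (1/2)^(n-j)"
    have rho0: "\<rho> \<ge> 0" unfolding \<rho>_def by simp
    have bb: "cmod (B d) \<le> \<rho> * (\<Sum>w\<in>{w\<in>T. kk w = d}. nu w)" for d
      unfolding B_def sum_distrib_left
    proof (rule order.trans[OF norm_sum sum_mono])
      fix w assume "w \<in> {w\<in>T. kk w = d}"
      have "\<bar>h1 w ^ j * h2 w ^ (n-j)\<bar> \<le> \<rho>" unfolding \<rho>_def abs_mult power_abs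
        by (intro mult_mono power_mono h1b h2b) auto
      hence "nu w * \<bar>h1 w ^ j * h2 w ^ (n-j)\<bar> \<le> nu w * \<rho>"
        by (intro mult_left_mono) (use fs_nonneg[OF nu] in auto)
      thus "cmod (complex_of_real (nu w * h1 w ^ j * h2 w ^ (n-j))) \<le> \<rho> * nu w"
        unfolding norm_of_real using fs_nonneg[OF nu, of w] by (simp add: abs_mult mult_ac)
    qed
    have boxes: "\<exists>x y. \<forall>w. w \<in> fsupp nu \<longrightarrow> kk w = d \<longrightarrow> w \<in> Bint x (1/R1) \<times> Bint y (1/R2)" for d
    proof (intro exI allI impI)
      fix w assume kw: "kk w = d"
      have "\<bar>fst w - of_int (fst d) / R1\<bar> \<le> 1/R1"
      proof -
        have "fst w - of_int (fst d) / R1 = h1 w / R1" unfolding h1_def kw using R by (simp add: field_simps)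
        thus ?thesis using h1b[of w] R by (simp add: abs_divide divide_right_mono)
      qed
      moreover have "\<bar>snd w - of_int (snd d) / R2\<bar> \<le> 1/R2"
      proof -
        have "snd w - of_int (snd d) / R2 = h2 w / R2" unfolding h2_def kw using R by (simp add: field_simps)
        thus ?thesis using h2b[of w] R by (simp add: abs_divide divide_right_mono)
      qed
      ultimately show "w \<in> Bint (of_int (fst d) / R1) (1/R1) \<times> Bint (of_int (snd d) / R2) (1/R2)"
        unfolding Bint_def by (cases w) (auto simp: abs_le_iff)
    qed
    have B2: "(\<Sum>d\<in>kk`T. (cmod (B d))^2) \<le> \<rho>^2 * N"
    proof -
      have "(\<Sum>d\<in>kk`T. (cmod (B d))^2) \<le> (\<Sum>d\<in>kk`T. \<rho>^2 * (\<Sum>w\<in>{w\<in>T. kk w = d}. nu w)^2)"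
        unfolding power_mult_distrib[symmetric] by (intro sum_mono power_mono bb) auto
      also have "\<dots> = \<rho>^2 * (\<Sum>d\<in>kk`T. (\<Sum>w\<in>{w\<in>T. kk w = d}. nu w)^2)"
        by (simp add: sum_distrib_left)
      also have "\<dots> \<le> \<rho>^2 * N"
        unfolding N_def T_def by (intro mult_left_mono fibers_sq[OF nu] boxes) auto
      finally show ?thesis .
    qed
    have "cmod (\<Sum>i\<in>S\<times>T. g i * of_real (af i ^ j * bf i ^ (n-j)))
        \<le> sqrt (\<Sum>d\<in>kk`T. (cmod (B d))^2) * sqrt (\<Sum>d\<in>kk`T. (cmod (A d))^2)"
      unfolding e1 by (rule cmod_CS)
    also have "\<dots> \<le> sqrt (\<rho>^2 * N) * sqrt L"
      using B2 A2 N0 by (intro mult_mono real_sqrt_le_mono) (auto intro: sum_nonneg)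
    also have "\<dots> = (1/2)^j * (1/2)^(n-j) * X" unfolding X_def real_sqrt_mult using rho0
      by (simp add: \<rho>_def mult_ac)
    finally show ?thesis .
  qed
  have "cmod (\<Sum>i\<in>S\<times>T. g i * cis (af i + bf i)) \<le> exp (1/2+1/2) * X"
    by (rule taylor_sep) (use fS fT H in auto)
  thus ?thesis unfolding Sc X_def L_def N_def by simp
qed

theorem lemma6p1:
  shows "\<exists>C::real. \<forall>R1 R2 :: real. \<forall>mu nu.
    R1 \<ge> 1 \<longrightarrow> R2 \<ge> 1 \<longrightarrow> fs_measure_on_square mu \<longrightarrow> fs_measure_on_square nu \<longrightarrow>
    cmod (\<Sum>z\<in>fsupp mu. \<Sum>w\<in>fsupp nu.
        cis (R1 * fst z * fst w + R2 * snd z * snd w) * complex_of_real (mu z * nu w))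
    \<le> C * sqrt (R1 * R2) * sqrt (\<Sum>z\<in>fsupp mu. mu z) * sqrt (\<Sum>w\<in>fsupp nu. nu w)
        * sqrt (Mmax R1 R2 mu) * sqrt (Mmax R1 R2 nu)"
proof (intro exI[of _ "exp 1 * sqrt (144 * exp pi)"] allI impI)
  fix R1 R2 :: real and mu nu :: "real \<times> real \<Rightarrow> real"
  assume a: "R1 \<ge> 1" "R2 \<ge> 1" "fs_measure_on_square mu" "fs_measure_on_square nu"
  have e: "exp 1 * (sqrt (144 * exp pi * (R1 * R2) * (Mmax R1 R2 mu * sum mu (fsupp mu))) * sqrt (Mmax R1 R2 nu * sum nu (fsupp nu)))
    = exp 1 * sqrt (144 * exp pi) * sqrt (R1 * R2) * sqrt (\<Sum>z\<in>fsupp mu. mu z) * sqrt (\<Sum>w\<in>fsupp nu. nu w)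
        * sqrt (Mmax R1 R2 mu) * sqrt (Mmax R1 R2 nu)"
    by (simp add: real_sqrt_mult mult_ac)
  show "cmod (\<Sum>z\<in>fsupp mu. \<Sum>w\<in>fsupp nu.
        cis (R1 * fst z * fst w + R2 * snd z * snd w) * complex_of_real (mu z * nu w))
    \<le> exp 1 * sqrt (144 * exp pi) * sqrt (R1 * R2) * sqrt (\<Sum>z\<in>fsupp mu. mu z) * sqrt (\<Sum>w\<in>fsupp nu. nu w)
        * sqrt (Mmax R1 R2 mu) * sqrt (Mmax R1 R2 nu)"
    using main_bound[OF a] unfolding e .
qed

end
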